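(* Let $A,B,C$ be distinct subsystems, $\rho_{ABC}$ a subnormalized state on $ABC$, $r\ge0$, $\eta\in(0,\operatorname{tr}\rho_{ABC}]$. Then $H^{r,\eta}_H(A|BC)_\rho\le H^{r,\eta}_H(A|B)_\rho$.
   Context: All logarithms are natural; subnormalized state = positive semidefinite, trace $\le1$; POVM effect = $0\le Q\le\mathbb 1$. Let $S_1\cdots S_N$ be a finite-dimensional composite system and $S_I$ the composite of the $S_i$, $i\in I$ ($A,B,C$ are of the form $S_I,S_J,S_K$ with pairwise disjoint index sets). A family of POVM-effect-complexity sets is a collection of sets $\mathcal M^r_{S_I}$ of POVM effects on $S_I$ with (i) $\mathbb 1_{S_I}\in\mathcal M^0_{S_I}$; (ii) $\mathcal M^r_{S_I}\subseteq\mathcal M^{r'}_{S_I}$ for $r\le r'$; (iii) $Q_1\otimes Q_2\in\mathcal M^{r+r'}_{S_IS_J}$ for disjoint $I,J$, $Q_1\in\mathcal M^r_{S_I}$, $Q_2\in\mathcal M^{r'}_{S_J}$. Fix such a family. Complexity relative entropy on subsystem $X$: $D^{r,\eta}_H(\rho\|\Gamma)=-\log\inf\{\operatorname{tr}(Q\Gamma)/\operatorname{tr}(Q\rho): Q\in\mathcal M^r_X,\operatorname{tr}(Q\rho)\ge\eta\}$. Complexity conditional entropy: $H^{r,\eta}_H(X|Y)_\rho=-D^{r,\eta}_H(\rho_{XY}\|\mathbb 1_X\otimes\rho_Y)$ with $\rho_{XY},\rho_Y$ the reduced states of $\rho$. *)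

theory Defs
  imports "HOL-Analysis.Analysis"
begin

text \<open>Finite-dimensional composite system S_1 ... S_N (indices 0..N-1), with local
dimensions d i.  The computational basis of the subsystem S_I is indexed by
configurations: functions x :: nat => nat with x i < d i for i in I and x i = 0
outside I.  An operator on S_I is a complex kernel on configurations that vanishes
outside cfg d I x cfg d I (i.e. a matrix w.r.t. the product basis).\<close>

type_synonym cfgs = "nat \<Rightarrow> nat"
type_synonym op = "cfgs \<Rightarrow> cfgs \<Rightarrow> complex"

definition cfg :: "(nat \<Rightarrow> nat) \<Rightarrow> nat set \<Rightarrow> cfgs set" where
  "cfg d I = {x. (\<forall>i\<in>I. x i < d i) \<and> (\<forall>i. i \<notin> I \<longrightarrow> x i = 0)}"

definition is_op :: "(nat \<Rightarrow> nat) \<Rightarrow> nat set \<Rightarrow> op \<Rightarrow> bool" where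
  "is_op d I X \<longleftrightarrow> (\<forall>x y. (x \<notin> cfg d I \<or> y \<notin> cfg d I) \<longrightarrow> X x y = 0)"

definition ident :: "(nat \<Rightarrow> nat) \<Rightarrow> nat set \<Rightarrow> op" where
  "ident d I = (\<lambda>x y. if x \<in> cfg d I \<and> x = y then 1 else 0)"

definition op_mult :: "(nat \<Rightarrow> nat) \<Rightarrow> nat set \<Rightarrow> op \<Rightarrow> op \<Rightarrow> op" where
  "op_mult d I X Y = (\<lambda>x y. \<Sum>z\<in>cfg d I. X x z * Y z y)"

definition op_trace :: "(nat \<Rightarrow> nat) \<Rightarrow> nat set \<Rightarrow> op \<Rightarrow> complex" where
  "op_trace d I X = (\<Sum>x\<in>cfg d I. X x x)"

definition psd :: "(nat \<Rightarrow> nat) \<Rightarrow> nat set \<Rightarrow> op \<Rightarrow> bool" where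
  "psd d I X \<longleftrightarrow> is_op d I X \<and>
     (\<forall>v :: cfgs \<Rightarrow> complex.
        Im (\<Sum>x\<in>cfg d I. \<Sum>y\<in>cfg d I. cnj (v x) * X x y * v y) = 0 \<and>
        Re (\<Sum>x\<in>cfg d I. \<Sum>y\<in>cfg d I. cnj (v x) * X x y * v y) \<ge> 0)"

definition subnormalized_state :: "(nat \<Rightarrow> nat) \<Rightarrow> nat set \<Rightarrow> op \<Rightarrow> bool" where
  "subnormalized_state d I \<rho> \<longleftrightarrow> psd d I \<rho> \<and> Re (op_trace d I \<rho>) \<le> 1"

definition povm_effect :: "(nat \<Rightarrow> nat) \<Rightarrow> nat set \<Rightarrow> op \<Rightarrow> bool" where
  "povm_effect d I Q \<longleftrightarrow> psd d I Q \<and> psd d I (\<lambda>x y. ident d I x y - Q x y)"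

definition restr :: "cfgs \<Rightarrow> nat set \<Rightarrow> cfgs" where
  "restr x I = (\<lambda>i. if i \<in> I then x i else 0)"

definition tensor :: "(nat \<Rightarrow> nat) \<Rightarrow> nat set \<Rightarrow> nat set \<Rightarrow> op \<Rightarrow> op \<Rightarrow> op" where
  "tensor d I J X Y = (\<lambda>x y. if x \<in> cfg d (I \<union> J) \<and> y \<in> cfg d (I \<union> J)
      then X (restr x I) (restr y I) * Y (restr x J) (restr y J) else 0)"

text \<open>Reduced operator on S_K of an operator on S_L (K \<subseteq> L): partial trace over S_(L-K).\<close>
definition reduce :: "(nat \<Rightarrow> nat) \<Rightarrow> nat set \<Rightarrow> nat set \<Rightarrow> op \<Rightarrow> op" where
  "reduce d L K \<rho> = (\<lambda>x y. if x \<in> cfg d K \<and> y \<in> cfg d K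
      then (\<Sum>z\<in>cfg d (L - K). \<rho> (\<lambda>i. x i + z i) (\<lambda>i. y i + z i)) else 0)"

definition complexity_family ::
  "(nat \<Rightarrow> nat) \<Rightarrow> nat \<Rightarrow> (real \<Rightarrow> nat set \<Rightarrow> op set) \<Rightarrow> bool" where
  "complexity_family d N M \<longleftrightarrow>
     (\<forall>I r. I \<subseteq> {..<N} \<and> 0 \<le> r \<longrightarrow> (\<forall>Q\<in>M r I. povm_effect d I Q)) \<and>
     (\<forall>I. I \<subseteq> {..<N} \<longrightarrow> ident d I \<in> M 0 I) \<and>
     (\<forall>I r r'. I \<subseteq> {..<N} \<and> 0 \<le> r \<and> r \<le> r' \<longrightarrow> M r I \<subseteq> M r' I) \<and>
     (\<forall>I J r r' Q1 Q2. I \<subseteq> {..<N} \<and> J \<subseteq> {..<N} \<and> I \<inter> J = {} \<and> 0 \<le> r \<and> 0 \<le> r' \<and>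
        Q1 \<in> M r I \<and> Q2 \<in> M r' J \<longrightarrow> tensor d I J Q1 Q2 \<in> M (r + r') (I \<union> J))"

definition elog :: "ereal \<Rightarrow> ereal" where
  "elog t = (if t = \<infinity> then \<infinity> else if t \<le> 0 then -\<infinity> else ereal (ln (real_of_ereal t)))"

text \<open>Complexity relative entropy on subsystem S_X (inf over the empty set is +\<infinity>).\<close>
definition cre :: "(nat \<Rightarrow> nat) \<Rightarrow> (real \<Rightarrow> nat set \<Rightarrow> op set) \<Rightarrow> real \<Rightarrow> real \<Rightarrow>
    nat set \<Rightarrow> op \<Rightarrow> op \<Rightarrow> ereal" where
  "cre d M r \<eta> X \<rho> \<Gamma> = - elog (Inf {ereal (Re (op_trace d X (op_mult d X Q \<Gamma>)) /
                                          Re (op_trace d X (op_mult d X Q \<rho>))) |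
        Q. Q \<in> M r X \<and> Re (op_trace d X (op_mult d X Q \<rho>)) \<ge> \<eta>})"

definition cce :: "(nat \<Rightarrow> nat) \<Rightarrow> (real \<Rightarrow> nat set \<Rightarrow> op set) \<Rightarrow> real \<Rightarrow> real \<Rightarrow>
    nat set \<Rightarrow> nat set \<Rightarrow> nat set \<Rightarrow> op \<Rightarrow> ereal" where
  "cce d M r \<eta> L X Y \<rho> = - cre d M r \<eta> (X \<union> Y) (reduce d L (X \<union> Y) \<rho>)
        (tensor d X Y (ident d X) (reduce d L Y \<rho>))"

end

theory Submission
  imports Defs
begin

lemma cfg_finite: "finite I \<Longrightarrow> finite (cfg d I)"
proof -
  assume f: "finite I"
  have inj: "inj_on (\<lambda>x. restrict x I) (cfg d I)"
    unfolding inj_on_def cfg_def restrict_def by (auto simp: fun_eq_iff) (metis)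
  have "(\<lambda>x. restrict x I) ` cfg d I \<subseteq> PiE I (\<lambda>i. {..<d i})"
    unfolding cfg_def by auto
  moreover have "finite (PiE I (\<lambda>i. {..<d i}))" using f by (simp add: finite_PiE)
  ultimately show ?thesis using inj finite_imageD finite_subset by blast
qed

lemma restr_add1:
  assumes "a \<in> cfg d I" "c \<in> cfg d J" "I \<inter> J = {}"
  shows "restr (\<lambda>i. a i + c i) I = a" "restr (\<lambda>i. a i + c i) J = c"
    "(\<lambda>i. a i + c i) \<in> cfg d (I \<union> J)"
  using assms unfolding restr_def cfg_def by (auto simp: fun_eq_iff)

lemma cfg_split_bij:
  assumes "I \<inter> J = {}"
  shows "bij_betw (\<lambda>(x,y). (\<lambda>i. x i + y i)) (cfg d I \<times> cfg d J) (cfg d (I \<union> J))"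
proof (rule bij_betw_byWitness[where f' = "\<lambda>z. (restr z I, restr z J)"])
  show "\<forall>a\<in>cfg d I \<times> cfg d J. (restr (case a of (x, y) \<Rightarrow> \<lambda>i. x i + y i) I,
          restr (case a of (x, y) \<Rightarrow> \<lambda>i. x i + y i) J) = a"
    using restr_add1[OF _ _ assms] by auto
  show "\<forall>a'\<in>cfg d (I \<union> J). (case (restr a' I, restr a' J) of (x, y) \<Rightarrow> \<lambda>i. x i + y i) = a'"
    using assms unfolding cfg_def restr_def by (auto simp: fun_eq_iff)
  show "(\<lambda>(x, y) i. x i + y i) ` (cfg d I \<times> cfg d J) \<subseteq> cfg d (I \<union> J)"
    using restr_add1(3)[OF _ _ assms] by auto
  show "(\<lambda>z. (restr z I, restr z J)) ` cfg d (I \<union> J) \<subseteq> cfg d I \<times> cfg d J"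
    unfolding cfg_def restr_def by auto
qed

lemma sum_cfg_split:
  assumes "I \<inter> J = {}"
  shows "(\<Sum>z\<in>cfg d (I \<union> J). f z) = (\<Sum>x\<in>cfg d I. \<Sum>y\<in>cfg d J. f (\<lambda>i. x i + y i))"
proof -
  have "(\<Sum>z\<in>cfg d (I \<union> J). f z) = (\<Sum>p\<in>cfg d I \<times> cfg d J. f ((\<lambda>(x,y). (\<lambda>i. x i + y i)) p))"
    using sum.reindex_bij_betw[OF cfg_split_bij[OF assms], of f] by simp
  also have "\<dots> = (\<Sum>x\<in>cfg d I. \<Sum>y\<in>cfg d J. f (\<lambda>i. x i + y i))"
    by (simp add: sum.cartesian_product case_prod_beta')
  finally show ?thesis .
qed

lemma trace_tensor_id:
  assumes dj: "I \<inter> J = {}" and fJ: "finite J"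
  shows "(\<Sum>x\<in>cfg d (I \<union> J). \<Sum>z\<in>cfg d (I \<union> J). tensor d I J Q (ident d J) x z * R z x)
   = (\<Sum>a\<in>cfg d I. \<Sum>b\<in>cfg d I. Q a b * (\<Sum>c\<in>cfg d J. R (\<lambda>i. b i + c i) (\<lambda>i. a i + c i)))"
proof -
  have "(\<Sum>x\<in>cfg d (I \<union> J). \<Sum>z\<in>cfg d (I \<union> J). tensor d I J Q (ident d J) x z * R z x)
     = (\<Sum>a\<in>cfg d I. \<Sum>c\<in>cfg d J. \<Sum>b\<in>cfg d I. \<Sum>c'\<in>cfg d J.
          tensor d I J Q (ident d J) (\<lambda>i. a i + c i) (\<lambda>i. b i + c' i) * R (\<lambda>i. b i + c' i) (\<lambda>i. a i + c i))"
    by (simp add: sum_cfg_split[OF dj])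
  also have "\<dots> = (\<Sum>a\<in>cfg d I. \<Sum>c\<in>cfg d J. \<Sum>b\<in>cfg d I. \<Sum>c'\<in>cfg d J.
          (if c' = c then Q a b * R (\<lambda>i. b i + c' i) (\<lambda>i. a i + c i) else 0))"
  proof (intro sum.cong refl)
    fix a c b c' assume h: "a \<in> cfg d I" "c \<in> cfg d J" "b \<in> cfg d I" "c' \<in> cfg d J"
    show "tensor d I J Q (ident d J) (\<lambda>i. a i + c i) (\<lambda>i. b i + c' i) * R (\<lambda>i. b i + c' i) (\<lambda>i. a i + c i)
      = (if c' = c then Q a b * R (\<lambda>i. b i + c' i) (\<lambda>i. a i + c i) else 0)"
      using restr_add1[OF h(1,2) dj] restr_add1[OF h(3,4) dj] h(2)
      unfolding tensor_def ident_def by auto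
  qed
  also have "\<dots> = (\<Sum>a\<in>cfg d I. \<Sum>c\<in>cfg d J. \<Sum>b\<in>cfg d I. Q a b * R (\<lambda>i. b i + c i) (\<lambda>i. a i + c i))"
    using cfg_finite[OF fJ] by (simp cong: sum.cong)
  also have "\<dots> = (\<Sum>a\<in>cfg d I. \<Sum>b\<in>cfg d I. Q a b * (\<Sum>c\<in>cfg d J. R (\<lambda>i. b i + c i) (\<lambda>i. a i + c i)))"
    by (simp add: sum_distrib_left sum.swap[of _ "cfg d J"])
  finally show ?thesis .
qed

lemma cfg_empty: "cfg d {} = {\<lambda>_. 0}"
  unfolding cfg_def by auto

lemma F1:
  assumes dj: "I \<inter> J = {}" and a: "a \<in> cfg d I" and b: "b \<in> cfg d I"
  shows "(\<Sum>c\<in>cfg d J. reduce d (I \<union> J) (I \<union> J) \<rho> (\<lambda>i. b i + c i) (\<lambda>i. a i + c i))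
     = reduce d (I \<union> J) I \<rho> b a"
proof -
  have e: "I \<union> J - I = J" using dj by auto
  have "(\<Sum>c\<in>cfg d J. reduce d (I \<union> J) (I \<union> J) \<rho> (\<lambda>i. b i + c i) (\<lambda>i. a i + c i))
      = (\<Sum>c\<in>cfg d J. \<rho> (\<lambda>i. b i + c i) (\<lambda>i. a i + c i))"
  proof (rule sum.cong[OF refl])
    fix c assume c: "c \<in> cfg d J"
    show "reduce d (I \<union> J) (I \<union> J) \<rho> (\<lambda>i. b i + c i) (\<lambda>i. a i + c i) = \<rho> (\<lambda>i. b i + c i) (\<lambda>i. a i + c i)"
      using restr_add1(3)[OF a c dj] restr_add1(3)[OF b c dj]
      unfolding reduce_def by (simp add: cfg_empty)
  qed
  also have "\<dots> = reduce d (I \<union> J) I \<rho> b a"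
    unfolding reduce_def e using a b by simp
  finally show ?thesis .
qed

lemma F2:
  assumes dAB: "A \<inter> B = {}" and dAC: "A \<inter> C = {}" and dBC: "B \<inter> C = {}"
    and a: "a \<in> cfg d (A \<union> B)" and b: "b \<in> cfg d (A \<union> B)"
  shows "(\<Sum>c\<in>cfg d C. tensor d A (B \<union> C) (ident d A) (reduce d (A \<union> B \<union> C) (B \<union> C) \<rho>)
            (\<lambda>i. b i + c i) (\<lambda>i. a i + c i))
     = tensor d A B (ident d A) (reduce d (A \<union> B \<union> C) B \<rho>) b a"
proof -
  let ?L = "A \<union> B \<union> C"
  have e1: "?L - (B \<union> C) = A" and e2: "?L - B = C \<union> A" using assms by auto
  have ra: "restr a A \<in> cfg d A" "restr b A \<in> cfg d A" "restr a B \<in> cfg d B" "restr b B \<in> cfg d B"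
    using a b unfolding cfg_def restr_def by auto
  have "(\<Sum>c\<in>cfg d C. tensor d A (B \<union> C) (ident d A) (reduce d ?L (B \<union> C) \<rho>)
            (\<lambda>i. b i + c i) (\<lambda>i. a i + c i))
     = (\<Sum>c\<in>cfg d C. ident d A (restr b A) (restr a A) *
          (\<Sum>w\<in>cfg d A. \<rho> (\<lambda>i. restr b B i + (c i + w i)) (\<lambda>i. restr a B i + (c i + w i))))"
  proof (rule sum.cong[OF refl])
    fix c assume c: "c \<in> cfg d C"
    have m1: "(\<lambda>i. b i + c i) \<in> cfg d (A \<union> (B \<union> C))" "(\<lambda>i. a i + c i) \<in> cfg d (A \<union> (B \<union> C))"
      using restr_add1(3)[OF a c] restr_add1(3)[OF b c] assms by (auto simp: Un_assoc)
    have r1: "restr (\<lambda>i. b i + c i) A = restr b A" "restr (\<lambda>i. a i + c i) A = restr a A"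
      using c dAC unfolding cfg_def restr_def by (auto simp: fun_eq_iff)
    have r2: "restr (\<lambda>i. b i + c i) (B \<union> C) = (\<lambda>i. restr b B i + c i)"
         "restr (\<lambda>i. a i + c i) (B \<union> C) = (\<lambda>i. restr a B i + c i)"
      using a b c assms unfolding cfg_def restr_def by (auto simp: fun_eq_iff)
    have m2: "(\<lambda>i. restr b B i + c i) \<in> cfg d (B \<union> C)" "(\<lambda>i. restr a B i + c i) \<in> cfg d (B \<union> C)"
      using restr_add1(3)[OF ra(4) c dBC] restr_add1(3)[OF ra(3) c dBC] by auto
    show "tensor d A (B \<union> C) (ident d A) (reduce d ?L (B \<union> C) \<rho>) (\<lambda>i. b i + c i) (\<lambda>i. a i + c i)
      = ident d A (restr b A) (restr a A) *
          (\<Sum>w\<in>cfg d A. \<rho> (\<lambda>i. restr b B i + (c i + w i)) (\<lambda>i. restr a B i + (c i + w i)))"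
      using m1 m2 unfolding tensor_def r1 r2 reduce_def e1 by (simp add: add.assoc)
  qed
  also have "\<dots> = ident d A (restr b A) (restr a A) *
       (\<Sum>v\<in>cfg d (C \<union> A). \<rho> (\<lambda>i. restr b B i + v i) (\<lambda>i. restr a B i + v i))"
    using dAC by (simp add: sum_cfg_split[of C A] sum_distrib_left Int_commute)
  also have "\<dots> = tensor d A B (ident d A) (reduce d ?L B \<rho>) b a"
    using a b ra unfolding tensor_def reduce_def e2 by simp
  finally show ?thesis .
qed

lemma elog_mono:
  assumes "t \<le> s" shows "elog t \<le> elog s"
proof (cases "s = \<infinity>")
  case True then show ?thesis by (simp add: elog_def)
next
  case False
  then have tn: "t \<noteq> \<infinity>" using assms by auto
  show ?thesis
  proof (cases "t \<le> 0")
    case True then show ?thesis using tn by (simp add: elog_def)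
  next
    case f: False
    then have s0: "\<not> s \<le> 0" using assms by auto
    obtain t' where t': "t = ereal t'" using tn f by (cases t) auto
    obtain s' where s': "s = ereal s'" using False s0 by (cases s) auto
    show ?thesis using assms f s0 False tn unfolding elog_def t' s' by simp
  qed
qed

lemma trace_expand: "op_trace d X (op_mult d X Q \<Gamma>) = (\<Sum>x\<in>cfg d X. \<Sum>z\<in>cfg d X. Q x z * \<Gamma> z x)"
  unfolding op_trace_def op_mult_def by simp

theorem propositionD23:
  fixes d :: "nat \<Rightarrow> nat" and N :: nat and M :: "real \<Rightarrow> nat set \<Rightarrow> op set"
    and A B C :: "nat set" and \<rho> :: op and r \<eta> :: real
  assumes dims: "\<forall>i<N. 0 < d i"
    and fam: "complexity_family d N M"
    and subA: "A \<subseteq> {..<N}" and subB: "B \<subseteq> {..<N}" and subC: "C \<subseteq> {..<N}"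
    and disj: "A \<inter> B = {}" "A \<inter> C = {}" "B \<inter> C = {}"
    and state: "subnormalized_state d (A \<union> B \<union> C) \<rho>"
    and r: "0 \<le> r"
    and eta: "0 < \<eta>" "\<eta> \<le> Re (op_trace d (A \<union> B \<union> C) \<rho>)"
  shows "cce d M r \<eta> (A \<union> B \<union> C) A (B \<union> C) \<rho> \<le> cce d M r \<eta> (A \<union> B \<union> C) A B \<rho>"
proof -
  let ?L = "A \<union> B \<union> C"
  let ?I = "A \<union> B"
  have dj: "?I \<inter> C = {}" using disj by auto
  have fC: "finite C" using subC finite_subset by blast
  let ?G1 = "tensor d A (B \<union> C) (ident d A) (reduce d ?L (B \<union> C) \<rho>)"
  let ?G2 = "tensor d A B (ident d A) (reduce d ?L B \<rho>)"
  let ?S1 = "{ereal (Re (op_trace d ?L (op_mult d ?L Q ?G1)) / Re (op_trace d ?L (op_mult d ?L Q (reduce d ?L ?L \<rho>)))) |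
        Q. Q \<in> M r ?L \<and> Re (op_trace d ?L (op_mult d ?L Q (reduce d ?L ?L \<rho>))) \<ge> \<eta>}"
  let ?S2 = "{ereal (Re (op_trace d ?I (op_mult d ?I Q ?G2)) / Re (op_trace d ?I (op_mult d ?I Q (reduce d ?L ?I \<rho>)))) |
        Q. Q \<in> M r ?I \<and> Re (op_trace d ?I (op_mult d ?I Q (reduce d ?L ?I \<rho>))) \<ge> \<eta>}"
  have sub: "?S2 \<subseteq> ?S1"
  proof
    fix t assume "t \<in> ?S2"
    then obtain Q where Q: "Q \<in> M r ?I" "Re (op_trace d ?I (op_mult d ?I Q (reduce d ?L ?I \<rho>))) \<ge> \<eta>"
      and t: "t = ereal (Re (op_trace d ?I (op_mult d ?I Q ?G2)) / Re (op_trace d ?I (op_mult d ?I Q (reduce d ?L ?I \<rho>))))"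
      by blast
    let ?Q' = "tensor d ?I C Q (ident d C)"
    note famD = fam[unfolded complexity_family_def]
    have h2: "ident d C \<in> M 0 C" using famD[THEN conjunct2, THEN conjunct1] subC by simp
    have "?Q' \<in> M (r + 0) (?I \<union> C)"
      using famD[THEN conjunct2, THEN conjunct2, THEN conjunct2, rule_format, of ?I C r 0 Q "ident d C"]
        subA subB subC dj Q(1) r h2 by simp
    then have mQ: "?Q' \<in> M r ?L" by simp
    have tr1: "op_trace d ?L (op_mult d ?L ?Q' (reduce d ?L ?L \<rho>)) = op_trace d ?I (op_mult d ?I Q (reduce d ?L ?I \<rho>))"
      unfolding trace_expand trace_tensor_id[OF dj fC]
      by (intro sum.cong refl) (simp add: F1[OF dj])
    have tr2: "op_trace d ?L (op_mult d ?L ?Q' ?G1) = op_trace d ?I (op_mult d ?I Q ?G2)"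
      unfolding trace_expand trace_tensor_id[OF dj fC]
      by (intro sum.cong refl) (simp add: F2[OF disj])
    show "t \<in> ?S1" using mQ Q(2) unfolding t tr1[symmetric] tr2[symmetric] by blast
  qed
  have "Inf ?S1 \<le> Inf ?S2" using sub by (rule Inf_superset_mono)
  then have "elog (Inf ?S1) \<le> elog (Inf ?S2)" by (rule elog_mono)
  then show ?thesis
    unfolding cce_def cre_def by (simp add: Un_assoc[symmetric])
qed

end
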